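(* Let $k\ge2$ be a power of two, $A,B\subseteq\Gamma$ finite sets, and $P\subseteq A-B$. Then $$\left(\frac{\sum_{x\in P}r(x)}{|A|^{1/2}|B|^{1/2}}\right)^{4k}\le\mathsf{E}_{2k}(A,\dots,A,B,\dots,B)\,\mathsf{T}_k(P),$$ where $r(x)=|\{(a,b)\in A\times B: a-b=x\}|$.
   Context: $\Gamma$ is an abelian group. $(f\circ f)(x)=\sum_y f(y)f(y+x)$. $\mathsf{E}_{2k}(A,\dots,A,B,\dots,B)$ with $k$ copies of $A$ and $k$ of $B$ is $\sum_x(A\circ A)(x)^k(B\circ B)(x)^k$. $\mathsf{T}_k(P)=|\{(p_1,\dots,p_k,p_1',\dots,p_k')\in P^{2k}: p_1+\dots+p_k=p_1'+\dots+p_k'\}|$. *)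

theory Defs
  imports Complex_Main
begin

definition corr :: "'a::ab_group_add set \<Rightarrow> 'a \<Rightarrow> nat" where
  "corr A x = card {y \<in> A. y + x \<in> A}"

definition diffset :: "'a::ab_group_add set \<Rightarrow> 'a set \<Rightarrow> 'a set" where
  "diffset A B = {a - b | a b. a \<in> A \<and> b \<in> B}"

text \<open>E_{2k}(A,..,A,B,..,B) = sum_x (A o A)(x)^k (B o B)(x)^k.  The summand vanishes
  outside the finite set A - A (the support of A o A), so we sum over it.\<close>
definition E2k :: "nat \<Rightarrow> 'a::ab_group_add set \<Rightarrow> 'a set \<Rightarrow> nat" where
  "E2k k A B = (\<Sum>x\<in>diffset A A. corr A x ^ k * corr B x ^ k)"

definition Tk :: "nat \<Rightarrow> 'a::ab_group_add set \<Rightarrow> nat" where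
  "Tk k P = card {(ps, qs). length ps = k \<and> length qs = k \<and> set ps \<subseteq> P \<and> set qs \<subseteq> P
                  \<and> sum_list ps = sum_list qs}"

definition rep :: "'a::ab_group_add set \<Rightarrow> 'a set \<Rightarrow> 'a \<Rightarrow> nat" where
  "rep A B x = card {(a, b). a \<in> A \<and> b \<in> B \<and> a - b = x}"

end

theory Submission
  imports Defs "HOL-Analysis.Convex"
begin


fun mp :: "'a set \<Rightarrow> ('a \<Rightarrow> 'a \<Rightarrow> real) \<Rightarrow> nat \<Rightarrow> 'a \<Rightarrow> 'a \<Rightarrow> real" where
  "mp A N 0 u w = (if u = w then 1 else 0)"
| "mp A N (Suc j) u w = (\<Sum>v\<in>A. N u v * mp A N j v w)"

lemma mp_add:
  assumes "finite A" "u \<in> A"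
  shows "mp A N (i + j) u w = (\<Sum>v\<in>A. mp A N i u v * mp A N j v w)"
  using assms(2)
proof (induction i arbitrary: u)
  case 0
  have "(\<Sum>v\<in>A. (if u = v then 1 else 0) * mp A N j v w) = (\<Sum>v\<in>A. if v = u then mp A N j v w else 0)"
    by (rule sum.cong) auto
  then show ?case using assms(1) 0 by (simp add: sum.delta)
next
  case (Suc i)
  have "mp A N (Suc i + j) u w = (\<Sum>v\<in>A. N u v * (\<Sum>y\<in>A. mp A N i v y * mp A N j y w))"
    using Suc.IH by simp
  also have "\<dots> = (\<Sum>v\<in>A. \<Sum>y\<in>A. N u v * mp A N i v y * mp A N j y w)"
    by (simp add: sum_distrib_left mult.assoc)
  also have "\<dots> = (\<Sum>y\<in>A. \<Sum>v\<in>A. N u v * mp A N i v y * mp A N j y w)"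
    by (rule sum.swap)
  also have "\<dots> = (\<Sum>y\<in>A. mp A N (Suc i) u y * mp A N j y w)"
    by (simp add: sum_distrib_right)
  finally show ?case .
qed

lemma mp_one:
  assumes "finite A" "v \<in> A"
  shows "mp A N 1 u v = N u v"
proof -
  have "(\<Sum>y\<in>A. N u y * (if y = v then 1 else 0)) = (\<Sum>y\<in>A. if y = v then N u y else 0)"
    by (rule sum.cong) auto
  then show ?thesis using assms by (simp add: sum.delta)
qed

lemma mp_sym:
  assumes "finite A" "\<And>u v. u \<in> A \<Longrightarrow> v \<in> A \<Longrightarrow> N u v = N v u"
  shows "u \<in> A \<Longrightarrow> w \<in> A \<Longrightarrow> mp A N j u w = mp A N j w u"
proof (induction j arbitrary: u w)
  case 0
  then show ?case by simp
next
  case (Suc j)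
  have "mp A N (Suc j) u w = (\<Sum>v\<in>A. N u v * mp A N j v w)" by simp
  also have "\<dots> = (\<Sum>v\<in>A. mp A N j w v * N v u)"
    using Suc assms(2) by (auto intro!: sum.cong simp: mult.commute)
  also have "\<dots> = (\<Sum>v\<in>A. mp A N j w v * mp A N 1 v u)"
    using mp_one[OF assms(1) Suc.prems(1)] by (intro sum.cong refl) (simp only:)
  also have "\<dots> = mp A N (j + 1) w u"
    by (simp only: mp_add[OF assms(1) Suc.prems(2)])
  finally show ?case by simp
qed

lemma mp_nonneg:
  assumes "\<And>u v. N u v \<ge> 0"
  shows "mp A N j u w \<ge> 0"
  by (induction j arbitrary: u) (auto intro!: sum_nonneg mult_nonneg_nonneg assms)

definition gg where "gg A N j = (\<Sum>u\<in>A. \<Sum>v\<in>A. mp A N j u v)"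
definition tr where "tr A N j = (\<Sum>u\<in>A. mp A N j u u)"

lemma gg_double:
  assumes "finite A" "\<And>u v. u \<in> A \<Longrightarrow> v \<in> A \<Longrightarrow> N u v = N v u"
  shows "(gg A N j)^2 \<le> gg A N (j + j) * card A"
proof -
  define c where "c v = (\<Sum>w\<in>A. mp A N j v w)" for v
  have "gg A N (j + j) = (\<Sum>u\<in>A. \<Sum>w\<in>A. \<Sum>v\<in>A. mp A N j u v * mp A N j v w)"
    unfolding gg_def using mp_add[OF assms(1)] by simp
  also have "\<dots> = (\<Sum>u\<in>A. \<Sum>v\<in>A. \<Sum>w\<in>A. mp A N j u v * mp A N j v w)"
    by (auto intro!: sum.cong sum.swap)
  also have "\<dots> = (\<Sum>v\<in>A. \<Sum>u\<in>A. \<Sum>w\<in>A. mp A N j u v * mp A N j v w)"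
    by (rule sum.swap)
  also have "\<dots> = (\<Sum>v\<in>A. (\<Sum>u\<in>A. mp A N j u v) * c v)"
    unfolding c_def sum_distrib_right sum_distrib_left by (rule sum.cong[OF refl], rule sum.swap)
  also have "\<dots> = (\<Sum>v\<in>A. (c v)^2)"
    unfolding c_def power2_eq_square
    using mp_sym[OF assms] by (auto intro!: sum.cong)
  finally have 1: "gg A N (j + j) = (\<Sum>v\<in>A. (c v)^2)" .
  have 2: "gg A N j = (\<Sum>v\<in>A. c v)" unfolding gg_def c_def by simp
  show ?thesis using sum_squared_le_sum_of_squares[of c A] 1 2 by simp
qed

lemma tr_double:
  assumes "finite A" "\<And>u v. u \<in> A \<Longrightarrow> v \<in> A \<Longrightarrow> N u v = N v u"
  shows "(gg A N j)^2 \<le> tr A N (j + j) * (card A)^2"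
proof -
  have "tr A N (j + j) = (\<Sum>u\<in>A. \<Sum>v\<in>A. mp A N j u v * mp A N j v u)"
    unfolding tr_def using mp_add[OF assms(1)] by simp
  also have "\<dots> = (\<Sum>u\<in>A. \<Sum>v\<in>A. (mp A N j u v)^2)"
    unfolding power2_eq_square using mp_sym[OF assms] by (auto intro!: sum.cong)
  also have "\<dots> = (\<Sum>p\<in>A \<times> A. (mp A N j (fst p) (snd p))^2)"
    by (simp add: sum.cartesian_product case_prod_beta)
  finally have 1: "tr A N (j + j) = (\<Sum>p\<in>A \<times> A. (mp A N j (fst p) (snd p))^2)" .
  have 2: "gg A N j = (\<Sum>p\<in>A \<times> A. mp A N j (fst p) (snd p))"
    unfolding gg_def by (simp add: sum.cartesian_product case_prod_beta)
  show ?thesis using sum_squared_le_sum_of_squares[of "\<lambda>p. mp A N j (fst p) (snd p)" "A \<times> A"] 1 2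
    by (simp add: card_cartesian_product power2_eq_square)
qed

lemma gg_pow:
  assumes "finite A" "\<And>u v. u \<in> A \<Longrightarrow> v \<in> A \<Longrightarrow> N u v = N v u" "\<And>u v. N u v \<ge> 0"
  shows "(gg A N 1)^(2^m) \<le> gg A N (2^m) * (card A)^(2^m - 1)"
proof (induction m)
  case 0
  then show ?case by simp
next
  case (Suc m)
  have nn: "0 \<le> (gg A N 1)^(2^m)" unfolding gg_def by (intro zero_le_power sum_nonneg mp_nonneg[OF assms(3)])
  have "(gg A N 1)^(2^Suc m) = ((gg A N 1)^(2^m))^2"
    by (simp add: power_mult[symmetric] mult.commute)
  also have "\<dots> \<le> (gg A N (2^m) * (card A)^(2^m - 1))^2"
    using Suc.IH nn by (simp add: power_mono)
  also have "\<dots> = (gg A N (2^m))^2 * (card A)^(2*(2^m - 1))"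
    by (simp add: power_mult_distrib power_mult[symmetric] mult.commute)
  also have "\<dots> \<le> gg A N (2^m + 2^m) * card A * (card A)^(2*(2^m - 1))"
    using gg_double[OF assms(1,2), where j="2^m"] by (intro mult_right_mono) auto
  also have "\<dots> = gg A N (2^Suc m) * (card A)^(2^Suc m - 1)"
  proof -
    have "(2::nat)^Suc m - 1 = Suc (2*(2^m - 1))"
      by (induction m) auto
    then show ?thesis by (simp add: mult_2)
  qed
  finally show ?case .
qed

lemma tr_pow:
  assumes "finite A" "\<And>u v. u \<in> A \<Longrightarrow> v \<in> A \<Longrightarrow> N u v = N v u" "\<And>u v. N u v \<ge> 0"
  shows "(gg A N 1)^(2^Suc m) \<le> tr A N (2^Suc m) * (card A)^(2^Suc m)"
proof -
  have nn: "0 \<le> (gg A N 1)^(2^m)" unfolding gg_def by (intro zero_le_power sum_nonneg mp_nonneg[OF assms(3)])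
  have "(gg A N 1)^(2^Suc m) = ((gg A N 1)^(2^m))^2"
    by (simp add: power_mult[symmetric] mult.commute)
  also have "\<dots> \<le> (gg A N (2^m) * (card A)^(2^m - 1))^2"
    using gg_pow[OF assms, where m=m] nn by (simp add: power_mono)
  also have "\<dots> = (gg A N (2^m))^2 * (card A)^(2*(2^m - 1))"
    by (simp add: power_mult_distrib power_mult[symmetric] mult.commute)
  also have "\<dots> \<le> tr A N (2^m + 2^m) * (card A)^2 * (card A)^(2*(2^m - 1))"
    using tr_double[OF assms(1,2), where j="2^m"] by (intro mult_right_mono) auto
  also have "\<dots> = tr A N (2^Suc m) * (card A)^(2^Suc m)"
  proof -
    have e: "2 + 2*(2^m - 1) = (2::nat)^Suc m"
      by (induction m) auto
    have "(real (card A))^2 * (real (card A))^(2*(2^m - 1)) = (real (card A))^(2^Suc m)"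
      by (simp only: power_add[symmetric] e)
    moreover have "(2::nat)^m + 2^m = 2^Suc m" by simp
    ultimately show ?thesis by (simp only: mult.assoc of_nat_power)
  qed
  finally show ?thesis .
qed




definition Nf :: "'a::ab_group_add set \<Rightarrow> 'a set \<Rightarrow> 'a \<Rightarrow> 'a \<Rightarrow> real" where
  "Nf B P u v = real (card {b\<in>B. u - b \<in> P \<and> v - b \<in> P})"

definition OW :: "'a::ab_group_add set \<Rightarrow> 'a set \<Rightarrow> 'a set \<Rightarrow> nat \<Rightarrow> 'a \<Rightarrow> 'a \<Rightarrow> ('a list \<times> 'a list) set" where
  "OW A B P j u w = {(as, bs). length as = j \<and> length bs = j \<and> set as \<subseteq> A \<and> set bs \<subseteq> B \<and>
     (\<forall>i<j. as!i - bs!i \<in> P \<and> (as @ [w]) ! Suc i - bs!i \<in> P) \<and> (as @ [w]) ! 0 = u}"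

lemma OW_finite:
  assumes "finite A" "finite B"
  shows "finite (OW A B P j u w)"
proof -
  have "OW A B P j u w \<subseteq> {as. set as \<subseteq> A \<and> length as = j} \<times> {bs. set bs \<subseteq> B \<and> length bs = j}"
    unfolding OW_def by auto
  moreover have "finite ({as. set as \<subseteq> A \<and> length as = j} \<times> {bs. set bs \<subseteq> B \<and> length bs = j})"
    using assms by (simp add: finite_lists_length_eq)
  ultimately show ?thesis by (rule finite_subset)
qed

lemma OW_0: "OW A B P 0 u w = (if u = w then {([], [])} else {})"
  unfolding OW_def by auto

lemma OW_Suc:
  assumes "u \<in> A" "w \<in> A"
  shows "OW A B P (Suc j) u w =
    (\<lambda>((v, b), (as, bs)). (u # as, b # bs)) `
      (SIGMA vb:(SIGMA v:A. {b\<in>B. u - b \<in> P \<and> v - b \<in> P}). OW A B P j (fst vb) w)"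
proof (intro equalityI subsetI)
  fix z assume z: "z \<in> OW A B P (Suc j) u w"
  obtain xs ys where zxy: "z = (xs, ys)" by fastforce
  from z zxy obtain x as b bs where xs: "xs = x # as" and ys: "ys = b # bs"
    unfolding OW_def by (auto simp: length_Suc_conv)
  note zz = z[unfolded zxy xs ys OW_def, simplified]
  define v where "v = (as @ [w]) ! 0"
  have xu: "x = u" using zz by simp
  have vA: "v \<in> A"
  proof (cases as)
    case Nil then show ?thesis using assms v_def by simp
  next
    case (Cons a l) then show ?thesis using zz v_def by auto
  qed
  have all0: "u - b \<in> P" "(as @ [w]) ! 0 - b \<in> P"
    and allS: "\<forall>i<j. as!i - bs!i \<in> P \<and> (as @ [w]) ! Suc i - bs!i \<in> P"
    using zz by (auto simp: All_less_Suc2)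
  have b: "b \<in> B" "u - b \<in> P" "v - b \<in> P"
  proof -
    show "b \<in> B" using zz by simp
    show "u - b \<in> P" using all0(1) .
    show "v - b \<in> P" using all0(2) unfolding v_def .
  qed
  have rest: "(as, bs) \<in> OW A B P j v w"
    unfolding OW_def using zz allS v_def by auto
  show "z \<in> (\<lambda>((v, b), (as, bs)). (u # as, b # bs)) `
      (SIGMA vb:(SIGMA v:A. {b\<in>B. u - b \<in> P \<and> v - b \<in> P}). OW A B P j (fst vb) w)"
    using vA b rest xu by (auto simp: zxy xs ys intro!: image_eqI[where x="((v, b), (as, bs))"])
next
  fix z assume "z \<in> (\<lambda>((v, b), (as, bs)). (u # as, b # bs)) `
      (SIGMA vb:(SIGMA v:A. {b\<in>B. u - b \<in> P \<and> v - b \<in> P}). OW A B P j (fst vb) w)"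
  then obtain v b as bs where z: "z = (u # as, b # bs)" and v: "v \<in> A" "b \<in> B" "u - b \<in> P" "v - b \<in> P"
    and r: "(as, bs) \<in> OW A B P j v w" by auto
  show "z \<in> OW A B P (Suc j) u w"
    using r v assms unfolding z OW_def by (auto simp: All_less_Suc2)
qed

lemma OW_card:
  assumes "finite A" "finite B" "u \<in> A" "w \<in> A"
  shows "real (card (OW A B P j u w)) = mp A (Nf B P) j u w"
  using assms(3)
proof (induction j arbitrary: u)
  case 0
  then show ?case by (simp add: OW_0)
next
  case (Suc j)
  let ?S = "SIGMA v:A. {b\<in>B. u - b \<in> P \<and> v - b \<in> P}"
  have inj: "inj_on (\<lambda>((v, b), (as, bs)). (u # as, b # bs)) (SIGMA vb:?S. OW A B P j (fst vb) w)"
  proof (rule inj_onI)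
    fix p q assume p: "p \<in> (SIGMA vb:?S. OW A B P j (fst vb) w)" and q: "q \<in> (SIGMA vb:?S. OW A B P j (fst vb) w)"
      and eq: "(\<lambda>((v, b), (as, bs)). (u # as, b # bs)) p = (\<lambda>((v, b), (as, bs)). (u # as, b # bs)) q"
    obtain v b as bs where pp: "p = ((v, b), (as, bs))" by (metis prod.exhaust)
    obtain v' b' as' bs' where qq: "q = ((v', b'), (as', bs'))" by (metis prod.exhaust)
    have e: "as = as'" "b = b'" "bs = bs'" using eq pp qq by auto
    have "(as @ [w]) ! 0 = v" using p pp unfolding OW_def by simp
    moreover have "(as' @ [w]) ! 0 = v'" using q qq unfolding OW_def by simp
    ultimately show "p = q" using pp qq e by simp
  qed
  have fS: "finite ?S" by (rule finite_SigmaI) (use assms in auto)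
  have "card (OW A B P (Suc j) u w) = card (SIGMA vb:?S. OW A B P j (fst vb) w)"
    using OW_Suc[OF Suc.prems assms(4)] inj by (simp add: card_image)
  also have "\<dots> = (\<Sum>vb\<in>?S. card (OW A B P j (fst vb) w))"
    using fS OW_finite[OF assms(1,2)] by simp
  also have "\<dots> = (\<Sum>v\<in>A. \<Sum>b\<in>{b\<in>B. u - b \<in> P \<and> v - b \<in> P}. card (OW A B P j v w))"
    by (subst sum.Sigma) (use assms in \<open>auto simp: case_prod_beta intro!: sum.cong\<close>)
  also have "\<dots> = (\<Sum>v\<in>A. card {b\<in>B. u - b \<in> P \<and> v - b \<in> P} * card (OW A B P j v w))"
    by simp
  finally have "real (card (OW A B P (Suc j) u w)) =
      (\<Sum>v\<in>A. real (card {b\<in>B. u - b \<in> P \<and> v - b \<in> P}) * real (card (OW A B P j v w)))"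
    by (simp add: of_nat_sum)
  also have "\<dots> = (\<Sum>v\<in>A. Nf B P u v * mp A (Nf B P) j v w)"
    by (intro sum.cong refl) (simp only: Nf_def[of B P u] Suc.IH)
  also have "\<dots> = mp A (Nf B P) (Suc j) u w"
    by simp
  finally show ?case .
qed

definition CW :: "'a::ab_group_add set \<Rightarrow> 'a set \<Rightarrow> 'a set \<Rightarrow> nat \<Rightarrow> ('a list \<times> 'a list) set" where
  "CW A B P k = {(as, bs). length as = k \<and> length bs = k \<and> set as \<subseteq> A \<and> set bs \<subseteq> B \<and>
     (\<forall>i<k. as!i - bs!i \<in> P \<and> rotate1 as ! i - bs!i \<in> P)}"

lemma rotate1_nth_app:
  assumes "i < length as"
  shows "rotate1 as ! i = (as @ [as ! 0]) ! Suc i"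
  using assms by (cases as) (auto simp: nth_append)

lemma CW_UN:
  assumes "k > 0"
  shows "CW A B P k = (\<Union>u\<in>A. OW A B P k u u)"
proof (intro equalityI subsetI)
  fix z assume z: "z \<in> CW A B P k"
  obtain as bs where zz: "z = (as, bs)" by fastforce
  have l: "length as = k" "as \<noteq> []" using z assms zz unfolding CW_def by auto
  have "as ! 0 \<in> A" using z zz l unfolding CW_def by (auto simp: set_subset_Cons neq_Nil_conv)
  moreover have "(as, bs) \<in> OW A B P k (as!0) (as!0)"
    using z zz l unfolding CW_def OW_def by (auto simp: rotate1_nth_app nth_append)
  ultimately show "z \<in> (\<Union>u\<in>A. OW A B P k u u)" using zz by auto
next
  fix z assume "z \<in> (\<Union>u\<in>A. OW A B P k u u)"
  then obtain u where u: "u \<in> A" and r0: "z \<in> OW A B P k u u"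
    by auto
  obtain as bs where zz: "z = (as, bs)" by fastforce
  note r = r0[unfolded zz]
  have l: "length as = k" "as \<noteq> []" using r assms unfolding OW_def by auto
  have u0: "as ! 0 = u" using r l assms unfolding OW_def by (auto simp: nth_append)
  show "z \<in> CW A B P k"
    using r l zz u0 assms unfolding CW_def OW_def by (auto simp: rotate1_nth_app)
qed

lemma CW_card:
  assumes "k > 0" "finite A" "finite B"
  shows "real (card (CW A B P k)) = tr A (Nf B P) k"
proof -
  have disj: "\<forall>u\<in>A. \<forall>u'\<in>A. u \<noteq> u' \<longrightarrow> OW A B P k u u \<inter> OW A B P k u' u' = {}"
    using assms(1) unfolding OW_def by (auto simp: nth_append)
  have "card (CW A B P k) = (\<Sum>u\<in>A. card (OW A B P k u u))"
    unfolding CW_UN[OF assms(1)]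
    by (rule card_UN_disjoint) (use assms disj OW_finite in auto)
  then show ?thesis unfolding tr_def using OW_card[OF assms(2,3)] by (simp add: of_nat_sum)
qed




definition phi :: "nat \<Rightarrow> ('a::ab_group_add list \<times> 'a list) \<Rightarrow> ('a list \<times> 'a list)" where
  "phi k z = (map (\<lambda>i. fst z ! i - snd z ! i) [0..<k], map (\<lambda>i. rotate1 (fst z) ! i - snd z ! i) [0..<k])"

definition TS :: "nat \<Rightarrow> 'a::ab_group_add set \<Rightarrow> ('a list \<times> 'a list) set" where
  "TS k P = {(ps, qs). length ps = k \<and> length qs = k \<and> set ps \<subseteq> P \<and> set qs \<subseteq> P
                  \<and> sum_list ps = sum_list qs}"

definition sh :: "'a::ab_group_add \<Rightarrow> ('a list \<times> 'a list) \<Rightarrow> ('a list \<times> 'a list)" where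
  "sh x z = (map (\<lambda>a. a + x) (fst z), map (\<lambda>b. b + x) (snd z))"

definition UU :: "nat \<Rightarrow> 'a set \<Rightarrow> 'a set \<Rightarrow> ('a list \<times> 'a list) set" where
  "UU k A B = {(as, bs). length as = k \<and> length bs = k \<and> set as \<subseteq> A \<and> set bs \<subseteq> B}"

lemma sum_list_rotate1: "sum_list (rotate1 (xs :: 'a::ab_group_add list)) = sum_list xs"
  by (cases xs) (simp_all add: add.commute)

lemma map_nth_len: "length xs = k \<Longrightarrow> map (\<lambda>i. xs ! i) [0..<k] = xs"
  using map_nth by blast

lemma phi_in:
  assumes "z \<in> CW A B P k"
  shows "phi k z \<in> TS k P"
proof -
  obtain as bs where z: "z = (as, bs)" by fastforce
  have c: "length as = k" "length bs = k" "\<forall>i<k. as!i - bs!i \<in> P \<and> rotate1 as ! i - bs!i \<in> P"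
    using assms z unfolding CW_def by auto
  have s1: "sum_list (map (\<lambda>i. as ! i - bs ! i) [0..<k]) = sum_list as - sum_list bs"
    using c by (simp add: sum_list_subtractf map_nth_len)
  have s2: "sum_list (map (\<lambda>i. rotate1 as ! i - bs ! i) [0..<k]) = sum_list as - sum_list bs"
    using c by (simp add: sum_list_subtractf map_nth_len sum_list_rotate1)
  show ?thesis unfolding phi_def TS_def z using c s1 s2 by auto
qed

lemma phi_eq_shift:
  assumes "z \<in> CW A B P k" "z' \<in> CW A B P k" "phi k z = phi k z'" "k > 0"
  shows "z' = sh (fst z' ! 0 - fst z ! 0) z"
proof -
  obtain as bs where z: "z = (as, bs)" by fastforce
  obtain as' bs' where z': "z' = (as', bs')" by fastforce
  have l: "length as = k" "length bs = k" "length as' = k" "length bs' = k"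
    using assms z z' unfolding CW_def by auto
  have e1: "\<And>i. i < k \<Longrightarrow> as!i - bs!i = as'!i - bs'!i"
    using assms(3) unfolding z z' phi_def by (simp add: list_eq_iff_nth_eq)
  have e2: "\<And>i. i < k \<Longrightarrow> rotate1 as ! i - bs!i = rotate1 as' ! i - bs'!i"
    using assms(3) unfolding z z' phi_def by (simp add: list_eq_iff_nth_eq)
  define x where "x = as' ! 0 - as ! 0"
  have step: "as' ! Suc i - as ! Suc i = as' ! i - as ! i" if "Suc i < k" for i
  proof -
    have "rotate1 as ! i = as ! Suc i" "rotate1 as' ! i = as' ! Suc i"
      using that l by (simp_all add: nth_rotate1)
    then have h2: "as' ! Suc i - as ! Suc i = bs' ! i - bs ! i"
      using e2[of i] that by (simp add: algebra_simps)
    have h1: "as' ! i - as ! i = bs' ! i - bs ! i"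
      using e1[of i] that by (simp add: algebra_simps)
    show ?thesis using h1 h2 by simp
  qed
  have allx: "as' ! i - as ! i = x" if "i < k" for i
    using that
  proof (induction i)
    case 0 then show ?case by (simp add: x_def)
  next
    case (Suc i) then show ?case using step[of i] by simp
  qed
  have "as' = map (\<lambda>a. a + x) as"
    using allx l by (intro nth_equalityI) (auto simp: algebra_simps)
  moreover have "bs' = map (\<lambda>b. b + x) bs"
  proof (intro nth_equalityI)
    show "length bs' = length (map (\<lambda>b. b + x) bs)" using l by simp
    fix i assume "i < length bs'"
    then have i: "i < k" using l by simp
    have "bs' ! i = as' ! i - (as ! i - bs ! i)" using e1[OF i] by (simp add: algebra_simps)
    then show "bs' ! i = map (\<lambda>b. b + x) bs ! i" using allx[OF i] i l by (simp add: algebra_simps)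
  qed
  ultimately show ?thesis unfolding sh_def z z' x_def by simp
qed

lemma card_shift_set:
  assumes "finite A" "finite B"
  shows "card {z \<in> UU k A B. sh x z \<in> UU k A B} = corr A x ^ k * corr B x ^ k"
proof -
  have L: "\<And>C. {as. length as = k \<and> set as \<subseteq> C \<and> set (map (\<lambda>a. a + x) as) \<subseteq> C} =
      {as. set as \<subseteq> {y\<in>C. y + x \<in> C} \<and> length as = k}"
    by auto
  have "{z \<in> UU k A B. sh x z \<in> UU k A B} =
     {as. length as = k \<and> set as \<subseteq> A \<and> set (map (\<lambda>a. a + x) as) \<subseteq> A} \<times>
     {bs. length bs = k \<and> set bs \<subseteq> B \<and> set (map (\<lambda>a. a + x) bs) \<subseteq> B}"
    unfolding UU_def sh_def by (auto simp del: set_map)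
  then have "{z \<in> UU k A B. sh x z \<in> UU k A B} =
     {as. set as \<subseteq> {y\<in>A. y + x \<in> A} \<and> length as = k} \<times> {bs. set bs \<subseteq> {y\<in>B. y + x \<in> B} \<and> length bs = k}"
    by (simp only: L)
  then show ?thesis unfolding corr_def using assms by (simp add: card_cartesian_product card_lists_length_eq)
qed

lemma CW_sub_UU: "CW A B P k \<subseteq> UU k A B"
  unfolding CW_def UU_def by auto

lemma finite_diffset: "finite A \<Longrightarrow> finite B \<Longrightarrow> finite (diffset A B)"
proof -
  assume "finite A" "finite B"
  moreover have "diffset A B = (\<lambda>(a, b). a - b) ` (A \<times> B)" unfolding diffset_def by auto
  ultimately show ?thesis by simp
qed

lemma CW_finite: "finite A \<Longrightarrow> finite B \<Longrightarrow> finite (CW A B P k)"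
proof -
  assume "finite A" "finite B"
  then have "finite (UU k A B)"
  proof -
    have "UU k A B = {as. set as \<subseteq> A \<and> length as = k} \<times> {bs. set bs \<subseteq> B \<and> length bs = k}"
      unfolding UU_def by auto
    then show ?thesis using \<open>finite A\<close> \<open>finite B\<close> by (simp add: finite_lists_length_eq)
  qed
  then show ?thesis by (rule finite_subset[OF CW_sub_UU])
qed

lemma TS_finite: "finite P \<Longrightarrow> finite (TS k P)"
proof -
  assume "finite P"
  have "TS k P \<subseteq> {as. set as \<subseteq> P \<and> length as = k} \<times> {bs. set bs \<subseteq> P \<and> length bs = k}"
    unfolding TS_def by auto
  moreover have "finite ({as. set as \<subseteq> P \<and> length as = k} \<times> {bs. set bs \<subseteq> P \<and> length bs = k})"
    using \<open>finite P\<close> by (simp add: finite_lists_length_eq)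
  ultimately show ?thesis by (rule finite_subset)
qed

lemma pairs_bound:
  assumes "finite A" "finite B" "k > 0"
  shows "card {(z, z'). z \<in> CW A B P k \<and> z' \<in> CW A B P k \<and> phi k z = phi k z'} \<le> E2k k A B"
proof -
  let ?R = "{(z, z'). z \<in> CW A B P k \<and> z' \<in> CW A B P k \<and> phi k z = phi k z'}"
  let ?F = "\<lambda>x. (\<lambda>z. (z, sh x z)) ` {z \<in> UU k A B. sh x z \<in> UU k A B}"
  have sub: "?R \<subseteq> (\<Union>x\<in>diffset A A. ?F x)"
  proof
    fix p assume "p \<in> ?R"
    then obtain z z' where p: "p = (z, z')" and zz: "z \<in> CW A B P k" "z' \<in> CW A B P k" "phi k z = phi k z'"
      by auto
    define x where "x = fst z' ! 0 - fst z ! 0"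
    have zs: "z' = sh x z" using phi_eq_shift[OF zz assms(3)] x_def by simp
    have "fst z ! 0 \<in> A" "fst z' ! 0 \<in> A"
      using zz assms(3) unfolding CW_def by (auto simp: case_prod_beta nth_mem subsetD)
    then have "x \<in> diffset A A" unfolding x_def diffset_def by blast
    moreover have "z \<in> UU k A B" "sh x z \<in> UU k A B" using zz zs CW_sub_UU by (metis subsetD)+
    ultimately show "p \<in> (\<Union>x\<in>diffset A A. ?F x)" using p zs by auto
  qed
  have fin: "finite (\<Union>x\<in>diffset A A. ?F x)"
  proof -
    have "finite (UU k A B)"
    proof -
      have "UU k A B = {as. set as \<subseteq> A \<and> length as = k} \<times> {bs. set bs \<subseteq> B \<and> length bs = k}"
        unfolding UU_def by auto
      then show ?thesis using assms by (simp add: finite_lists_length_eq)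
    qed
    then show ?thesis using finite_diffset[OF assms(1,1)] by auto
  qed
  have "card ?R \<le> card (\<Union>x\<in>diffset A A. ?F x)" by (rule card_mono[OF fin sub])
  also have "\<dots> \<le> (\<Sum>x\<in>diffset A A. card (?F x))"
    by (rule card_UN_le[OF finite_diffset[OF assms(1,1)]])
  also have "\<dots> \<le> (\<Sum>x\<in>diffset A A. corr A x ^ k * corr B x ^ k)"
  proof (intro sum_mono)
    fix x
    have "finite (UU k A B)"
    proof -
      have "UU k A B = {as. set as \<subseteq> A \<and> length as = k} \<times> {bs. set bs \<subseteq> B \<and> length bs = k}"
        unfolding UU_def by auto
      then show ?thesis using assms by (simp add: finite_lists_length_eq)
    qed
    then have "finite {z \<in> UU k A B. sh x z \<in> UU k A B}" by simp
    then have "card (?F x) \<le> card {z \<in> UU k A B. sh x z \<in> UU k A B}" by (rule card_image_le)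
    then show "card (?F x) \<le> corr A x ^ k * corr B x ^ k" using card_shift_set[OF assms(1,2)] by simp
  qed
  finally show ?thesis unfolding E2k_def .
qed




lemma CW_CS:
  assumes "finite A" "finite B" "finite P" "k > 0"
  shows "(real (card (CW A B P k)))^2 \<le> real (Tk k P) * real (E2k k A B)"
proof -
  let ?W = "CW A B P k"
  let ?X = "\<lambda>c. {z \<in> ?W. phi k z = c}"
  have fW: "finite ?W" using CW_finite assms by blast
  have fT: "finite (TS k P)" using TS_finite assms by blast
  have W_UN: "?W = (\<Union>c\<in>TS k P. ?X c)"
  proof
    show "?W \<subseteq> (\<Union>c\<in>TS k P. ?X c)"
    proof
      fix z assume z: "z \<in> ?W"
      show "z \<in> (\<Union>c\<in>TS k P. ?X c)" using phi_in[OF z] z by blast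
    qed
  qed blast
  have fX: "\<forall>c\<in>TS k P. finite (?X c)" using fW by simp
  have dX: "\<forall>c\<in>TS k P. \<forall>c'\<in>TS k P. c \<noteq> c' \<longrightarrow> ?X c \<inter> ?X c' = {}" by blast
  have fX2: "\<forall>c\<in>TS k P. finite (?X c \<times> ?X c)" using fW by simp
  have dX2: "\<forall>c\<in>TS k P. \<forall>c'\<in>TS k P. c \<noteq> c' \<longrightarrow> (?X c \<times> ?X c) \<inter> (?X c' \<times> ?X c') = {}" by blast
  have h: "card (\<Union>c\<in>TS k P. ?X c) = (\<Sum>c\<in>TS k P. card (?X c))"
    by (rule card_UN_disjoint[OF fT fX dX])
  have "card ?W = (\<Sum>c\<in>TS k P. card (?X c))"
    by (rule trans[OF arg_cong[where f=card, OF W_UN] h])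
  then have s1: "real (card ?W) = (\<Sum>c\<in>TS k P. real (card (?X c)))" by (simp add: of_nat_sum)
  let ?R = "{(z, z'). z \<in> ?W \<and> z' \<in> ?W \<and> phi k z = phi k z'}"
  have R_UN: "?R = (\<Union>c\<in>TS k P. ?X c \<times> ?X c)"
  proof
    show "?R \<subseteq> (\<Union>c\<in>TS k P. ?X c \<times> ?X c)"
    proof
      fix p assume p: "p \<in> ?R"
      obtain z z' where pz0: "p = (z, z')" by (cases p)
      then have pz: "p = (z, z')" "z \<in> ?W" "z' \<in> ?W" "phi k z = phi k z'" using p by simp_all
      have "p \<in> ?X (phi k z) \<times> ?X (phi k z)" using pz by simp
      then show "p \<in> (\<Union>c\<in>TS k P. ?X c \<times> ?X c)" using phi_in[OF pz(2)] by (rule UN_I[rotated])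
    qed
  next
    show "(\<Union>c\<in>TS k P. ?X c \<times> ?X c) \<subseteq> ?R"
    proof
      fix p assume "p \<in> (\<Union>c\<in>TS k P. ?X c \<times> ?X c)"
      then obtain c where c: "p \<in> ?X c \<times> ?X c" by (rule UN_E)
      obtain z z' where pz0: "p = (z, z')" by (cases p)
      show "p \<in> ?R" using c unfolding pz0 by simp
    qed
  qed
  have "card ?R = (\<Sum>c\<in>TS k P. card (?X c \<times> ?X c))"
    unfolding R_UN by (rule card_UN_disjoint[OF fT fX2 dX2])
  then have s2: "real (card ?R) = (\<Sum>c\<in>TS k P. (real (card (?X c)))^2)"
    by (simp add: of_nat_sum card_cartesian_product power2_eq_square)
  have "(real (card ?W))^2 \<le> (\<Sum>c\<in>TS k P. (real (card (?X c)))^2) * card (TS k P)"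
    unfolding s1 by (rule sum_squared_le_sum_of_squares)
  also have "\<dots> = real (card ?R) * real (Tk k P)"
    unfolding s2 Tk_def TS_def by simp
  also have "\<dots> \<le> real (E2k k A B) * real (Tk k P)"
    using pairs_bound[OF assms(1,2,4), of P] by (intro mult_right_mono) auto
  finally show ?thesis by (simp add: mult.commute)
qed

lemma card_filter_sum:
  assumes "finite B"
  shows "card {b\<in>B. Q b} = (\<Sum>b\<in>B. if Q b then 1 else (0::nat))"
proof -
  have "card {b\<in>B. Q b} = (\<Sum>b\<in>{b\<in>B. Q b}. (1::nat))" by simp
  also have "\<dots> = (\<Sum>b\<in>B. if Q b then 1 else 0)" using assms by (rule sum.inter_filter)
  finally show ?thesis .
qed

lemma card_pairs_sum:
  assumes "finite A" "finite B"
  shows "card {(a, b). a \<in> A \<and> b \<in> B \<and> Q a b} = (\<Sum>a\<in>A. \<Sum>b\<in>B. if Q a b then 1 else (0::nat))"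
proof -
  have "{(a, b). a \<in> A \<and> b \<in> B \<and> Q a b} = (SIGMA a:A. {b\<in>B. Q a b})" by auto
  then have "card {(a, b). a \<in> A \<and> b \<in> B \<and> Q a b} = (\<Sum>a\<in>A. card {b\<in>B. Q a b})"
    using assms by simp
  also have "\<dots> = (\<Sum>a\<in>A. \<Sum>b\<in>B. if Q a b then 1 else 0)"
    using card_filter_sum[OF assms(2)] by simp
  finally show ?thesis .
qed




theorem proposition6:
  fixes A B P :: "'a::ab_group_add set" and k :: nat
  assumes "k \<ge> 2" and "\<exists>m. k = 2 ^ m"
    and "finite A" and "finite B"
    and "P \<subseteq> diffset A B"
  shows "((\<Sum>x\<in>P. real (rep A B x)) / (sqrt (real (card A)) * sqrt (real (card B)))) ^ (4 * k)
           \<le> real (E2k k A B) * real (Tk k P)"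
proof -
  from assms(2) obtain m where km: "k = 2^m" by blast
  have "m \<noteq> 0" using assms(1) km by (cases m) auto
  then obtain m' where m': "m = Suc m'" by (cases m) auto
  have k0: "k > 0" using assms(1) by simp
  have fP: "finite P" using finite_subset[OF assms(5) finite_diffset[OF assms(3,4)]] .
  define deg where "deg b = real (card {a\<in>A. a - b \<in> P})" for b
  define sg where "sg = (\<Sum>x\<in>P. real (rep A B x))"
  have degs: "deg b = (\<Sum>a\<in>A. if a - b \<in> P then 1 else 0)" for b
    unfolding deg_def card_filter_sum[OF assms(3)] of_nat_sum by (rule sum.cong) auto
  have "sg = (\<Sum>x\<in>P. \<Sum>a\<in>A. \<Sum>b\<in>B. if a - b = x then 1 else (0::real))"
    unfolding sg_def rep_def card_pairs_sum[OF assms(3,4)] of_nat_sum by (intro sum.cong refl) auto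
  also have "\<dots> = (\<Sum>a\<in>A. \<Sum>x\<in>P. \<Sum>b\<in>B. if a - b = x then 1 else (0::real))"
    by (rule sum.swap)
  also have "\<dots> = (\<Sum>a\<in>A. \<Sum>b\<in>B. \<Sum>x\<in>P. if a - b = x then 1 else (0::real))"
    by (rule sum.cong[OF refl], rule sum.swap)
  also have "\<dots> = (\<Sum>a\<in>A. \<Sum>b\<in>B. if a - b \<in> P then 1 else (0::real))"
    using fP by (simp add: sum.delta)
  also have "\<dots> = (\<Sum>b\<in>B. \<Sum>a\<in>A. if a - b \<in> P then 1 else (0::real))"
    by (rule sum.swap)
  also have "\<dots> = (\<Sum>b\<in>B. deg b)" by (simp add: degs)
  finally have sig: "sg = (\<Sum>b\<in>B. deg b)" .
  have Nsym: "\<And>u v. u \<in> A \<Longrightarrow> v \<in> A \<Longrightarrow> Nf B P u v = Nf B P v u"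
    unfolding Nf_def by (simp add: conj_commute)
  have Nnn: "\<And>u v. Nf B P u v \<ge> 0" unfolding Nf_def by simp
  have Nsum: "Nf B P u v = (\<Sum>b\<in>B. (if u - b \<in> P then 1 else 0) * (if v - b \<in> P then 1 else (0::real)))" for u v
    unfolding Nf_def card_filter_sum[OF assms(4)] of_nat_sum by (intro sum.cong refl) auto
  have "gg A (Nf B P) 1 = (\<Sum>u\<in>A. \<Sum>v\<in>A. Nf B P u v)"
    unfolding gg_def using mp_one[OF assms(3)] by (simp del: mp.simps)
  also have "\<dots> = (\<Sum>u\<in>A. \<Sum>v\<in>A. \<Sum>b\<in>B. (if u - b \<in> P then 1 else 0) * (if v - b \<in> P then 1 else (0::real)))"
    by (simp only: Nsum)
  also have "\<dots> = (\<Sum>u\<in>A. \<Sum>b\<in>B. \<Sum>v\<in>A. (if u - b \<in> P then 1 else 0) * (if v - b \<in> P then 1 else (0::real)))"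
    by (rule sum.cong[OF refl], rule sum.swap)
  also have "\<dots> = (\<Sum>b\<in>B. \<Sum>u\<in>A. \<Sum>v\<in>A. (if u - b \<in> P then 1 else 0) * (if v - b \<in> P then 1 else (0::real)))"
    by (rule sum.swap)
  also have "\<dots> = (\<Sum>b\<in>B. (deg b)^2)"
    unfolding degs power2_eq_square sum_product by (rule refl)
  finally have g1: "gg A (Nf B P) 1 = (\<Sum>b\<in>B. (deg b)^2)" .
  have cs: "sg^2 \<le> gg A (Nf B P) 1 * card B"
    unfolding sig g1 by (rule sum_squared_le_sum_of_squares)
  have trp: "(gg A (Nf B P) 1)^k \<le> tr A (Nf B P) k * (card A)^k"
    using tr_pow[OF assms(3) Nsym Nnn, where m=m'] km m' by simp
  have trc: "tr A (Nf B P) k = real (card (CW A B P k))"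
    using CW_card[OF k0 assms(3,4)] by simp
  have CS2: "(real (card (CW A B P k)))^2 \<le> real (Tk k P) * real (E2k k A B)"
    by (rule CW_CS[OF assms(3,4) fP k0])
  define a where "a = real (card A)"
  define b where "b = real (card B)"
  define t where "t = real (card (CW A B P k))"
  define g where "g = gg A (Nf B P) 1"
  have a0: "a \<ge> 0" "b \<ge> 0" "t \<ge> 0" unfolding a_def b_def t_def by auto
  have sg0: "sg \<ge> 0" unfolding sg_def by (simp add: sum_nonneg)
  have g0: "g \<ge> 0" unfolding g_def gg_def by (intro sum_nonneg mp_nonneg[OF Nnn])
  have "sg^(2*k) = (sg^2)^k" by (simp add: power_mult)
  also have "\<dots> \<le> (g * b)^k" using cs sg0 unfolding g_def b_def by (intro power_mono) auto
  also have "\<dots> = g^k * b^k" by (simp add: power_mult_distrib)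
  also have "\<dots> \<le> (t * a^k) * b^k"
    using trp trc a0 unfolding g_def t_def a_def by (intro mult_right_mono) auto
  finally have s2k: "sg^(2*k) \<le> t * (a*b)^k" by (simp add: power_mult_distrib mult.assoc)
  have "sg^(4*k) = (sg^(2*k))^2" by (simp add: power_mult[symmetric] mult.commute)
  also have "\<dots> \<le> (t * (a*b)^k)^2" using s2k sg0 by (intro power_mono) auto
  also have "\<dots> = t^2 * (a*b)^(2*k)" by (simp add: power_mult_distrib power_mult[symmetric] mult.commute)
  also have "\<dots> \<le> (real (E2k k A B) * real (Tk k P)) * (a*b)^(2*k)"
    using CS2 a0 unfolding t_def by (intro mult_right_mono) (auto simp: mult.commute)
  finally have main: "sg^(4*k) \<le> (real (E2k k A B) * real (Tk k P)) * (a*b)^(2*k)" .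
  show ?thesis
  proof (cases "a = 0 \<or> b = 0")
    case True
    then have "sqrt a * sqrt b = 0" by auto
    then have "(sg / (sqrt a * sqrt b))^(4*k) = 0" using k0 by simp
    note z = this[unfolded sg_def a_def b_def]
    have nn: "0 \<le> real (E2k k A B) * real (Tk k P)" by simp
    show ?thesis using z nn by linarith
  next
    case False
    then have pos: "a > 0" "b > 0" using a0 by auto
    have "(sqrt a * sqrt b)^(4*k) = (a*b)^(2*k)"
    proof -
      have "(sqrt a * sqrt b)^2 = a * b" using pos by (simp add: power_mult_distrib)
      then have "(sqrt a * sqrt b)^(4*k) = (a*b)^(2*k)"
        by (metis (no_types) mult.assoc mult_2 power_mult numeral_Bit0 numeral_times_numeral numeral_One
            mult.commute)
      then show ?thesis .
    qed
    then have "(sg / (sqrt a * sqrt b))^(4*k) = sg^(4*k) / (a*b)^(2*k)"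
      by (simp add: power_divide)
    also have "\<dots> \<le> real (E2k k A B) * real (Tk k P)"
      using main pos by (simp add: divide_le_eq)
    finally show ?thesis unfolding sg_def a_def b_def .
  qed
qed


end
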